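(* Let $p$ be a prime, $r\ge1$, and let $L$ be an even $\mathbb Z_p$-lattice which splits off $r$ hyperbolic planes, i.e. $L=U^r\oplus\tilde L$ for a hyperbolic plane $U$ over $\mathbb Z_p$ and an even $\mathbb Z_p$-lattice $\tilde L$. Let $\gamma\in D_L^r$ and let $M$ be a $\mathbb Z_p$-lattice with basis $(e_i)_{i=1,\dots,r}$ whose moment matrix $q((e_i)_i)$ lies in the class $q(\gamma)+\Lambda_r(\mathbb Z_p)$. Then there exists an isometric embedding $\phi:M\to L'$ with $(\phi(e_i))_{i=1,\dots,r}\in\gamma+L^r$.
   Context: A $\mathbb Z_p$-lattice is a free $\mathbb Z_p$-module of finite rank with a nondegenerate $\mathbb Q_p$-valued quadratic form $q$ and bilinear form $(x,y)=q(x+y)-q(x)-q(y)$; even means $q(L)\subseteq\mathbb Z_p$. $L'$ is the dual lattice and $D_L=L'/L$. A hyperbolic plane over $\mathbb Z_p$ has a basis $f,f'$ with $q(f)=q(f')=0$, $(f,f')=1$. For an $r$-tuple $\mathbf x=(x_1,\dots,x_r)$ its moment matrix is $q(\mathbf x)=\big((x_i,x_j)/2\big)_{i,j}$. $\Lambda_r(\mathbb Z_p)$ is the set of symmetric $r\times r$ matrices with diagonal entries in $\mathbb Z_p$ and off-diagonal entries in $\frac12\mathbb Z_p$; for $\gamma\in D_L^r$ the class $q(\gamma)+\Lambda_r(\mathbb Z_p)$ is $q(\tilde\gamma)+\Lambda_r(\mathbb Z_p)$ for any representative $\tilde\gamma\in L'^r$ (independent of the representative). *)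

theory Defs
  imports "HOL-Computational_Algebra.Primes"
begin

text \<open>A field K with a map v (the valuation; its value at 0 is irrelevant)
is Q_p iff v is a discrete valuation with v(p) = 1, residue field with p
elements (every integral element is congruent to one of 0,...,p-1), and K is
complete for v.\<close>

definition padic_field :: "nat \<Rightarrow> ('a::field \<Rightarrow> int) \<Rightarrow> bool" where
  "padic_field p v \<longleftrightarrow>
     prime p \<and> (of_nat p :: 'a) \<noteq> 0 \<and> v (of_nat p) = 1 \<and>
     (\<forall>x y. x \<noteq> 0 \<longrightarrow> y \<noteq> 0 \<longrightarrow> v (x * y) = v x + v y) \<and>
     (\<forall>x y. x \<noteq> 0 \<longrightarrow> y \<noteq> 0 \<longrightarrow> x + y \<noteq> 0 \<longrightarrow> min (v x) (v y) \<le> v (x + y)) \<and>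
     (\<forall>x. x \<noteq> 0 \<longrightarrow> 0 \<le> v x \<longrightarrow>
        (\<exists>k<p. x = of_nat k \<or> (x - of_nat k \<noteq> 0 \<and> 1 \<le> v (x - of_nat k)))) \<and>
     (\<forall>s :: nat \<Rightarrow> 'a.
        (\<forall>N::int. \<exists>M. \<forall>m\<ge>M. \<forall>n\<ge>M. s m = s n \<or> N \<le> v (s m - s n)) \<longrightarrow>
        (\<exists>l. \<forall>N::int. \<exists>M. \<forall>n\<ge>M. s n = l \<or> N \<le> v (s n - l)))"

definition Zp :: "('a::field \<Rightarrow> int) \<Rightarrow> 'a set" where
  "Zp v = {x. x = 0 \<or> 0 \<le> v x}"

definition vector_space_over :: "('a::field \<Rightarrow> 'v::ab_group_add \<Rightarrow> 'v) \<Rightarrow> bool" where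
  "vector_space_over sc \<longleftrightarrow>
     (\<forall>a x y. sc a (x + y) = sc a x + sc a y) \<and>
     (\<forall>a b x. sc (a + b) x = sc a x + sc b x) \<and>
     (\<forall>a b x. sc a (sc b x) = sc (a * b) x) \<and>
     (\<forall>x. sc 1 x = x)"

definition bil :: "('v::ab_group_add \<Rightarrow> 'a::field) \<Rightarrow> 'v \<Rightarrow> 'v \<Rightarrow> 'a" where
  "bil q x y = q (x + y) - q x - q y"

definition quadratic_form :: "('a::field \<Rightarrow> 'v::ab_group_add \<Rightarrow> 'v) \<Rightarrow> ('v \<Rightarrow> 'a) \<Rightarrow> bool" where
  "quadratic_form sc q \<longleftrightarrow>
     (\<forall>a x. q (sc a x) = a * a * q x) \<and>
     (\<forall>x y z. bil q (x + y) z = bil q x z + bil q y z) \<and>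
     (\<forall>a x y. bil q (sc a x) y = a * bil q x y)"

definition moment :: "('v::ab_group_add \<Rightarrow> 'a::field) \<Rightarrow> (nat \<Rightarrow> 'v) \<Rightarrow> nat \<Rightarrow> nat \<Rightarrow> 'a" where
  "moment q x i j = bil q (x i) (x j) / 2"

definition Qspan :: "('a::field \<Rightarrow> 'v::ab_group_add \<Rightarrow> 'v) \<Rightarrow> (nat \<Rightarrow> 'v) \<Rightarrow> nat \<Rightarrow> 'v set" where
  "Qspan sc b n = {(\<Sum>i<n. sc (a i) (b i)) | a. True}"

definition Zspan :: "('a::field \<Rightarrow> int) \<Rightarrow> ('a \<Rightarrow> 'v::ab_group_add \<Rightarrow> 'v) \<Rightarrow> (nat \<Rightarrow> 'v) \<Rightarrow> nat \<Rightarrow> 'v set" where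
  "Zspan v sc b n = {(\<Sum>i<n. sc (a i) (b i)) | a. \<forall>i<n. a i \<in> Zp v}"

text \<open>A Z_p-lattice of rank n, given by a basis b_0..b_{n-1}: the Z_p-span of a
Q_p-linearly independent family, with nondegenerate form (on L tensor Q_p = Qspan).\<close>
definition is_lattice :: "('a::field \<Rightarrow> int) \<Rightarrow> ('a \<Rightarrow> 'v::ab_group_add \<Rightarrow> 'v) \<Rightarrow> ('v \<Rightarrow> 'a)
    \<Rightarrow> (nat \<Rightarrow> 'v) \<Rightarrow> nat \<Rightarrow> bool" where
  "is_lattice v sc q b n \<longleftrightarrow>
     (\<forall>a. (\<Sum>i<n. sc (a i) (b i)) = 0 \<longrightarrow> (\<forall>i<n. a i = 0)) \<and>
     (\<forall>x\<in>Qspan sc b n. (\<forall>y\<in>Qspan sc b n. bil q x y = 0) \<longrightarrow> x = 0)"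

definition even_lattice :: "('a::field \<Rightarrow> int) \<Rightarrow> ('a \<Rightarrow> 'v::ab_group_add \<Rightarrow> 'v) \<Rightarrow> ('v \<Rightarrow> 'a)
    \<Rightarrow> (nat \<Rightarrow> 'v) \<Rightarrow> nat \<Rightarrow> bool" where
  "even_lattice v sc q b n \<longleftrightarrow> (\<forall>x\<in>Zspan v sc b n. q x \<in> Zp v)"

definition dual_lattice :: "('a::field \<Rightarrow> int) \<Rightarrow> ('a \<Rightarrow> 'v::ab_group_add \<Rightarrow> 'v) \<Rightarrow> ('v \<Rightarrow> 'a)
    \<Rightarrow> (nat \<Rightarrow> 'v) \<Rightarrow> nat \<Rightarrow> 'v set" where
  "dual_lattice v sc q b n = {x \<in> Qspan sc b n. \<forall>y\<in>Zspan v sc b n. bil q x y \<in> Zp v}"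

text \<open>Basis of U^r (+) Ltilde: f_0..f_{r-1}, f'_0..f'_{r-1}, c_0..c_{m-1}.\<close>
definition hypfam :: "nat \<Rightarrow> (nat \<Rightarrow> 'v) \<Rightarrow> (nat \<Rightarrow> 'v) \<Rightarrow> (nat \<Rightarrow> 'v) \<Rightarrow> nat \<Rightarrow> 'v" where
  "hypfam r f f' c i = (if i < r then f i else if i < 2 * r then f' (i - r) else c (i - 2 * r))"

definition hyperbolic_frame :: "('v::ab_group_add \<Rightarrow> 'a::field) \<Rightarrow> nat \<Rightarrow> (nat \<Rightarrow> 'v) \<Rightarrow> (nat \<Rightarrow> 'v)
    \<Rightarrow> (nat \<Rightarrow> 'v) \<Rightarrow> nat \<Rightarrow> bool" where
  "hyperbolic_frame q r f f' c m \<longleftrightarrow>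
     (\<forall>i<r. q (f i) = 0 \<and> q (f' i) = 0) \<and>
     (\<forall>i<r. \<forall>j<r. bil q (f i) (f j) = 0 \<and> bil q (f' i) (f' j) = 0 \<and>
                  bil q (f i) (f' j) = (if i = j then 1 else 0)) \<and>
     (\<forall>i<r. \<forall>k<m. bil q (f i) (c k) = 0 \<and> bil q (f' i) (c k) = 0)"

definition in_Lambda :: "('a::field \<Rightarrow> int) \<Rightarrow> nat \<Rightarrow> (nat \<Rightarrow> nat \<Rightarrow> 'a) \<Rightarrow> bool" where
  "in_Lambda v r A \<longleftrightarrow>
     (\<forall>i<r. \<forall>j<r. A i j = A j i \<and> (if i = j then A i j \<in> Zp v else 2 * A i j \<in> Zp v))"

definition isometric_embedding :: "('a::field \<Rightarrow> int)
    \<Rightarrow> ('a \<Rightarrow> 'w::ab_group_add \<Rightarrow> 'w) \<Rightarrow> ('w \<Rightarrow> 'a) \<Rightarrow> 'w set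
    \<Rightarrow> ('a \<Rightarrow> 'v::ab_group_add \<Rightarrow> 'v) \<Rightarrow> ('v \<Rightarrow> 'a) \<Rightarrow> 'v set \<Rightarrow> ('w \<Rightarrow> 'v) \<Rightarrow> bool" where
  "isometric_embedding v scM qM M scL qL T \<phi> \<longleftrightarrow>
     (\<forall>x\<in>M. \<phi> x \<in> T) \<and>
     (\<forall>x\<in>M. \<forall>y\<in>M. \<phi> (x + y) = \<phi> x + \<phi> y) \<and>
     (\<forall>a\<in>Zp v. \<forall>x\<in>M. \<phi> (scM a x) = scL a (\<phi> x)) \<and>
     inj_on \<phi> M \<and>
     (\<forall>x\<in>M. qL (\<phi> x) = qM x)"

end

theory Submission imports Defs begin

lemma Zspan_I: "(\<forall>i<n. a i \<in> Zp v) \<Longrightarrow> (\<Sum>i<n. sc (a i) (b i)) \<in> Zspan v sc b n"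
  unfolding Zspan_def by blast

lemma Qspan_I: "(\<Sum>i<n. sc (a i) (b i)) \<in> Qspan sc b n"
  unfolding Qspan_def by blast

section \<open>Scalar multiplication\<close>

context fixes sc :: "'a::field \<Rightarrow> 'v::ab_group_add \<Rightarrow> 'v"
  assumes VS: "vector_space_over sc"
begin

lemma sc_add: "sc a (x + y) = sc a x + sc a y" using VS by (simp add: vector_space_over_def)
lemma sc_distr: "sc (a + b) x = sc a x + sc b x" using VS by (simp add: vector_space_over_def)
lemma sc_assoc: "sc a (sc b x) = sc (a * b) x" using VS by (simp add: vector_space_over_def)
lemma sc_one: "sc 1 x = x" using VS by (simp add: vector_space_over_def)

lemma sc_zero_left: "sc 0 x = 0"
proof -
  have "sc 0 x + sc 0 x = sc 0 x + 0" using sc_distr[of 0 0 x] by simp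
  then show ?thesis by simp
qed

lemma sc_zero_right: "sc a 0 = 0"
proof -
  have "sc a 0 + sc a 0 = sc a 0 + 0" using sc_add[of a 0 0] by simp
  then show ?thesis by simp
qed

lemma sc_neg: "sc (- a) x = - sc a x"
proof -
  have "sc a x + sc (-a) x = 0" using sc_distr[of a "-a" x] sc_zero_left by simp
  then show ?thesis by (simp add: eq_neg_iff_add_eq_0 add.commute)
qed

lemma sc_diff: "sc (a - b) x = sc a x - sc b x"
  using sc_distr[of a "-b" x] sc_neg by simp

lemma sc_sum: "sc a (\<Sum>i\<in>A. F i) = (\<Sum>i\<in>A. sc a (F i))"
  by (induction A rule: infinite_finite_induct) (auto simp: sc_zero_right sc_add)

lemma lincomb_add: "(\<Sum>i<n. sc (a i) (b i)) + (\<Sum>i<n. sc (c i) (b i)) = (\<Sum>i<n. sc (a i + c i) (b i))"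
  by (simp add: sum.distrib[symmetric] sc_distr)

lemma lincomb_diff: "(\<Sum>i<n. sc (a i) (b i)) - (\<Sum>i<n. sc (c i) (b i)) = (\<Sum>i<n. sc (a i - c i) (b i))"
  by (simp add: sum_subtractf[symmetric] sc_diff)

lemma lincomb_sc: "sc t (\<Sum>i<n. sc (a i) (b i)) = (\<Sum>i<n. sc (t * a i) (b i))"
  by (simp add: sc_sum sc_assoc)

lemma lincomb_delta: "k < (n::nat) \<Longrightarrow> (\<Sum>i<n. sc (if i = k then 1 else 0) (b i)) = b k"
proof -
  assume k: "k < n"
  have "(\<Sum>i<n. sc (if i = k then 1 else 0) (b i)) = (\<Sum>i<n. if i = k then b i else 0)"
    by (rule sum.cong) (auto simp: sc_one sc_zero_left)
  also have "\<dots> = (\<Sum>i<n. if i = k then b k else 0)" by (rule sum.cong) auto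
  also have "\<dots> = b k" using k sum.delta[of "{..<n}" k "\<lambda>_. b k"] by simp
  finally show ?thesis .
qed

lemma lincomb_unique:
  assumes li: "\<forall>a. (\<Sum>i<n. sc (a i) (b i)) = 0 \<longrightarrow> (\<forall>i<n. a i = 0)"
    and eq: "(\<Sum>i<n. sc (a i) (b i)) = (\<Sum>i<n. sc (c i) (b i))" and i: "i < n"
  shows "a i = c i"
proof -
  have "(\<Sum>i<n. sc (a i - c i) (b i)) = 0" using eq lincomb_diff[of a b n c] by simp
  then have "a i - c i = 0" using li[rule_format, of "\<lambda>i. a i - c i"] i by blast
  then show ?thesis by simp
qed

end

section \<open>Bilinear form\<close>

lemma bil_sym: "bil q x y = bil q y x"
  by (simp add: bil_def algebra_simps)

context fixes sc :: "'a::field \<Rightarrow> 'v::ab_group_add \<Rightarrow> 'v" and q :: "'v \<Rightarrow> 'a"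
  assumes QF: "quadratic_form sc q"
begin

lemma bil_add_left: "bil q (x + y) z = bil q x z + bil q y z"
  using QF by (simp add: quadratic_form_def)
lemma bil_add_right: "bil q z (x + y) = bil q z x + bil q z y"
  using bil_add_left[of x y z] by (simp only: bil_sym[of q z])
lemma bil_sc_left: "bil q (sc a x) y = a * bil q x y"
  using QF by (simp add: quadratic_form_def)
lemma bil_sc_right: "bil q y (sc a x) = a * bil q y x"
  using bil_sc_left[of a x y] by (simp only: bil_sym[of q y])
lemma bil_zero_left: "bil q 0 y = 0"
proof -
  have "bil q 0 y + bil q 0 y = bil q 0 y + 0" using bil_add_left[of 0 0 y] by simp
  then show ?thesis by (simp only: add_left_cancel)
qed
lemma bil_neg_left: "bil q (- x) y = - bil q x y"
  using bil_add_left[of x "-x" y] bil_zero_left by (simp add: eq_neg_iff_add_eq_0 add.commute)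
lemma bil_diff_left: "bil q (x - y) z = bil q x z - bil q y z"
  using bil_add_left[of x "-y" z] bil_neg_left by simp
lemma bil_diff_right: "bil q z (x - y) = bil q z x - bil q z y"
  using bil_diff_left[of x y z] by (simp only: bil_sym[of q z])
lemma bil_sum_left: "bil q (\<Sum>i\<in>A. F i) y = (\<Sum>i\<in>A. bil q (F i) y)"
  by (induction A rule: infinite_finite_induct) (auto simp: bil_zero_left bil_add_left)
lemma bil_sum_right: "bil q y (\<Sum>i\<in>A. F i) = (\<Sum>i\<in>A. bil q y (F i))"
  using bil_sum_left[of F A y] by (simp only: bil_sym[of q y])

lemma bil_lincomb_left: "bil q (\<Sum>i<n. sc (a i) (b i)) y = (\<Sum>i<n. a i * bil q (b i) y)"
  by (simp add: bil_sum_left bil_sc_left)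
lemma bil_lincomb_right: "bil q y (\<Sum>i<n. sc (a i) (b i)) = (\<Sum>i<n. a i * bil q y (b i))"
  by (simp add: bil_sum_right bil_sc_right)

lemma q_bil:
  assumes VS: "vector_space_over sc" and two: "(2::'a) \<noteq> 0"
  shows "q x = bil q x x / 2"
proof -
  have "sc (1 + 1) x = sc 1 x + sc 1 x" by (rule sc_distr[OF VS])
  then have "sc 2 x = x + x" by (simp add: sc_one[OF VS])
  moreover have "q (sc 2 x) = 2 * 2 * q x" using QF unfolding quadratic_form_def by blast
  ultimately have "q (x + x) = 2 * 2 * q x" by simp
  then have "bil q x x = 2 * q x" by (simp add: bil_def)
  then show ?thesis using two by simp
qed

lemma q_lincomb:
  assumes VS: "vector_space_over sc" and two: "(2::'a) \<noteq> 0"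
  shows "q (\<Sum>i<n. sc (a i) (b i)) = (\<Sum>i<n. \<Sum>j<n. a i * a j * bil q (b i) (b j)) / 2"
  apply (simp add: q_bil[OF VS two] bil_lincomb_left bil_lincomb_right sum_distrib_left mult.assoc)
  apply (intro impI sum.cong refl)
  apply (subst bil_sym, rule refl)
  done

end


section \<open>Z_p\<close>

context fixes p :: nat and v :: "'a::field \<Rightarrow> int"
  assumes Qp: "padic_field p v"
begin

lemma v_mult: "x \<noteq> 0 \<Longrightarrow> y \<noteq> 0 \<Longrightarrow> v (x * y) = v x + v y"
  using Qp by (simp add: padic_field_def)

lemma v_one: "v 1 = 0" using v_mult[of 1 1] by simp

lemma v_neg_one: "v (-1) = 0" using v_mult[of "-1" "-1"] v_one by simp

lemma Zp_0: "0 \<in> Zp v" by (simp add: Zp_def)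
lemma Zp_1: "1 \<in> Zp v" by (simp add: Zp_def v_one)

lemma Zp_mult: "x \<in> Zp v \<Longrightarrow> y \<in> Zp v \<Longrightarrow> x * y \<in> Zp v"
proof -
  assume x: "x \<in> Zp v" and y: "y \<in> Zp v"
  show ?thesis
  proof (cases "x = 0 \<or> y = 0")
    case True then show ?thesis by (auto simp: Zp_def)
  next
    case False
    then have "v (x * y) = v x + v y" using v_mult by blast
    then show ?thesis using x y False by (auto simp: Zp_def)
  qed
qed

lemma Zp_neg: "x \<in> Zp v \<Longrightarrow> - x \<in> Zp v"
proof -
  assume x: "x \<in> Zp v"
  have "- x = (-1) * x" by simp
  moreover have "(-1) \<in> Zp v" by (simp add: Zp_def v_neg_one)
  ultimately show ?thesis using Zp_mult x by metis
qed

lemma Zp_add: "x \<in> Zp v \<Longrightarrow> y \<in> Zp v \<Longrightarrow> x + y \<in> Zp v"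
proof -
  assume x: "x \<in> Zp v" and y: "y \<in> Zp v"
  show ?thesis
  proof (cases "x = 0 \<or> y = 0 \<or> x + y = 0")
    case True then show ?thesis using x y by (auto simp: Zp_def)
  next
    case False
    then have "min (v x) (v y) \<le> v (x + y)" using Qp by (simp add: padic_field_def)
    then show ?thesis using x y False by (auto simp: Zp_def)
  qed
qed

lemma Zp_diff: "x \<in> Zp v \<Longrightarrow> y \<in> Zp v \<Longrightarrow> x - y \<in> Zp v"
  using Zp_add[of x "-y"] Zp_neg by simp

lemma Zp_sum: "(\<And>i. i \<in> A \<Longrightarrow> F i \<in> Zp v) \<Longrightarrow> (\<Sum>i\<in>A. F i) \<in> Zp v"
  by (induction A rule: infinite_finite_induct) (auto simp: Zp_0 Zp_add)

lemma two_nz: "(2::'a) \<noteq> 0"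
proof
  assume two: "(2::'a) = 0"
  have pr: "prime p" and np: "(of_nat p :: 'a) \<noteq> 0" and vp: "v (of_nat p) = 1"
    using Qp by (auto simp: padic_field_def)
  have "\<And>n. (of_nat n :: 'a) = of_nat (n mod 2)"
  proof -
    fix n :: nat
    have "(of_nat n :: 'a) = of_nat (2 * (n div 2) + n mod 2)" by simp
    also have "\<dots> = 2 * of_nat (n div 2) + of_nat (n mod 2)" by (simp only: of_nat_add of_nat_mult of_nat_numeral)
    finally show "(of_nat n :: 'a) = of_nat (n mod 2)" using two by simp
  qed
  then have "(of_nat p :: 'a) = of_nat (p mod 2)" .
  moreover have "p mod 2 = 0 \<or> p mod 2 = 1" by auto
  ultimately show False using np vp v_one by auto
qed

end

section \<open>Spans\<close>

context fixes p :: nat and v :: "'a::field \<Rightarrow> int"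
  and sc :: "'a \<Rightarrow> 'v::ab_group_add \<Rightarrow> 'v"
  assumes Qp: "padic_field p v" and VS: "vector_space_over sc"
begin

lemma Zspan_add: "x \<in> Zspan v sc b n \<Longrightarrow> y \<in> Zspan v sc b n \<Longrightarrow> x + y \<in> Zspan v sc b n"
proof -
  assume x: "x \<in> Zspan v sc b n" and y: "y \<in> Zspan v sc b n"
  obtain a where a: "x = (\<Sum>i<n. sc (a i) (b i))" "\<forall>i<n. a i \<in> Zp v" using x unfolding Zspan_def by blast
  obtain c where c: "y = (\<Sum>i<n. sc (c i) (b i))" "\<forall>i<n. c i \<in> Zp v" using y unfolding Zspan_def by blast
  have eq: "x + y = (\<Sum>i<n. sc (a i + c i) (b i))" using a c lincomb_add[OF VS] by simp
  have cz: "\<forall>i<n. a i + c i \<in> Zp v" using a c Zp_add[OF Qp] by blast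
  show ?thesis unfolding eq by (rule Zspan_I[OF cz])
qed

lemma Zspan_sc: "t \<in> Zp v \<Longrightarrow> x \<in> Zspan v sc b n \<Longrightarrow> sc t x \<in> Zspan v sc b n"
proof -
  assume t: "t \<in> Zp v" and x: "x \<in> Zspan v sc b n"
  obtain a where a: "x = (\<Sum>i<n. sc (a i) (b i))" "\<forall>i<n. a i \<in> Zp v" using x unfolding Zspan_def by blast
  have eq: "sc t x = (\<Sum>i<n. sc (t * a i) (b i))" using a lincomb_sc[OF VS] by simp
  have cz: "\<forall>i<n. t * a i \<in> Zp v" using a t Zp_mult[OF Qp] by blast
  show ?thesis unfolding eq by (rule Zspan_I[OF cz])
qed

lemma Zspan_0: "0 \<in> Zspan v sc b n"
proof -
  have eq: "0 = (\<Sum>i<n. sc ((\<lambda>_. 0) i) (b i))" by (simp add: sc_zero_left[OF VS])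
  have cz: "\<forall>i<n. (\<lambda>_. 0) i \<in> Zp v" using Zp_0[OF Qp] by simp
  show ?thesis by (subst eq) (rule Zspan_I[OF cz])
qed

lemma Zspan_neg: "x \<in> Zspan v sc b n \<Longrightarrow> - x \<in> Zspan v sc b n"
  using Zspan_sc[of "-1" x] Zp_neg[OF Qp Zp_1[OF Qp]] sc_neg[OF VS, of 1 x] sc_one[OF VS] by simp

lemma Zspan_diff: "x \<in> Zspan v sc b n \<Longrightarrow> y \<in> Zspan v sc b n \<Longrightarrow> x - y \<in> Zspan v sc b n"
  using Zspan_add[where x=x and y="-y"] Zspan_neg[where x=y] by simp

lemma Zspan_sum: "(\<And>i. i \<in> A \<Longrightarrow> F i \<in> Zspan v sc b n) \<Longrightarrow> (\<Sum>i\<in>A. F i) \<in> Zspan v sc b n"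
  by (induction A rule: infinite_finite_induct) (auto simp: Zspan_0 Zspan_add)

lemma Zspan_basis: "k < n \<Longrightarrow> b k \<in> Zspan v sc b n"
  unfolding Zspan_def
  using lincomb_delta[OF VS, of k n b, symmetric] Zp_0[OF Qp] Zp_1[OF Qp]
  by (intro CollectI exI[of _ "\<lambda>i. if i = k then 1 else 0"]) auto

lemma Zspan_Qspan: "x \<in> Zspan v sc b n \<Longrightarrow> x \<in> Qspan sc b n"
  unfolding Zspan_def Qspan_def by blast

lemma Qspan_add: "x \<in> Qspan sc b n \<Longrightarrow> y \<in> Qspan sc b n \<Longrightarrow> x + y \<in> Qspan sc b n"
proof -
  assume x: "x \<in> Qspan sc b n" and y: "y \<in> Qspan sc b n"
  obtain a where a: "x = (\<Sum>i<n. sc (a i) (b i))" using x unfolding Qspan_def by blast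
  obtain c where c: "y = (\<Sum>i<n. sc (c i) (b i))" using y unfolding Qspan_def by blast
  have eq: "x + y = (\<Sum>i<n. sc (a i + c i) (b i))" using a c lincomb_add[OF VS] by simp
  show ?thesis unfolding eq by (rule Qspan_I)
qed

lemma Qspan_sc: "x \<in> Qspan sc b n \<Longrightarrow> sc t x \<in> Qspan sc b n"
proof -
  assume x: "x \<in> Qspan sc b n"
  obtain a where a: "x = (\<Sum>i<n. sc (a i) (b i))" using x unfolding Qspan_def by blast
  have eq: "sc t x = (\<Sum>i<n. sc (t * a i) (b i))" using a lincomb_sc[OF VS] by simp
  show ?thesis unfolding eq by (rule Qspan_I)
qed

lemma Qspan_0: "0 \<in> Qspan sc b n"
  using Zspan_0 Zspan_Qspan by blast

context fixes q :: "'v \<Rightarrow> 'a" assumes QF: "quadratic_form sc q"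
begin

lemma dual_add: "x \<in> dual_lattice v sc q b n \<Longrightarrow> y \<in> dual_lattice v sc q b n
   \<Longrightarrow> x + y \<in> dual_lattice v sc q b n"
  unfolding dual_lattice_def using Qspan_add bil_add_left[OF QF] Zp_add[OF Qp] by auto

lemma dual_sc: "t \<in> Zp v \<Longrightarrow> x \<in> dual_lattice v sc q b n \<Longrightarrow> sc t x \<in> dual_lattice v sc q b n"
  unfolding dual_lattice_def using Qspan_sc bil_sc_left[OF QF] Zp_mult[OF Qp] by auto

lemma dual_0: "0 \<in> dual_lattice v sc q b n"
  unfolding dual_lattice_def using Qspan_0 bil_zero_left[OF QF] Zp_0[OF Qp] by auto

lemma dual_sum: "(\<And>i. i \<in> A \<Longrightarrow> F i \<in> dual_lattice v sc q b n) \<Longrightarrow> (\<Sum>i\<in>A. F i) \<in> dual_lattice v sc q b n"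
  by (induction A rule: infinite_finite_induct) (auto simp: dual_0 dual_add)

lemma Zspan_bil_Zp:
  assumes B: "\<And>i j. i < n \<Longrightarrow> j < n \<Longrightarrow> bil q (b i) (b j) \<in> Zp v"
    and x: "x \<in> Zspan v sc b n" and y: "y \<in> Zspan v sc b n"
  shows "bil q x y \<in> Zp v"
proof -
  obtain a where a: "x = (\<Sum>i<n. sc (a i) (b i))" "\<forall>i<n. a i \<in> Zp v" using x unfolding Zspan_def by blast
  obtain c where c: "y = (\<Sum>i<n. sc (c i) (b i))" "\<forall>i<n. c i \<in> Zp v" using y unfolding Zspan_def by blast
  have "bil q x y = (\<Sum>i<n. c i * (\<Sum>j<n. a j * bil q (b j) (b i)))"
    using a c by (simp add: bil_lincomb_left[OF QF] bil_lincomb_right[OF QF])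
  also have "\<dots> \<in> Zp v"
  proof (rule Zp_sum[OF Qp])
    fix i assume i: "i \<in> {..<n}"
    have "(\<Sum>j<n. a j * bil q (b j) (b i)) \<in> Zp v"
    proof (rule Zp_sum[OF Qp])
      fix j assume j: "j \<in> {..<n}"
      show "a j * bil q (b j) (b i) \<in> Zp v" using a(2) B i j Zp_mult[OF Qp] by simp
    qed
    then show "c i * (\<Sum>j<n. a j * bil q (b j) (b i)) \<in> Zp v" using c(2) i Zp_mult[OF Qp] by simp
  qed
  finally show ?thesis .
qed

lemma even_bil:
  assumes ev: "even_lattice v sc q b n" and i: "i < n" and j: "j < n"
  shows "bil q (b i) (b j) \<in> Zp v"
proof -
  have "b i \<in> Zspan v sc b n" "b j \<in> Zspan v sc b n" "b i + b j \<in> Zspan v sc b n"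
    using Zspan_basis i j Zspan_add by auto
  then have "q (b i + b j) \<in> Zp v" "q (b i) \<in> Zp v" "q (b j) \<in> Zp v"
    using ev unfolding even_lattice_def by auto
  then show ?thesis unfolding bil_def by (intro Zp_diff[OF Qp])
qed

lemma Zspan_dual:
  assumes ev: "even_lattice v sc q b n" and x: "x \<in> Zspan v sc b n"
  shows "x \<in> dual_lattice v sc q b n"
proof -
  have B: "\<And>i j. i < n \<Longrightarrow> j < n \<Longrightarrow> bil q (b i) (b j) \<in> Zp v" using even_bil[OF ev] by blast
  have "\<forall>y\<in>Zspan v sc b n. bil q x y \<in> Zp v"
  proof
    fix y assume "y \<in> Zspan v sc b n"
    then show "bil q x y \<in> Zp v" using Zspan_bil_Zp[OF B x] by blast
  qed
  then show ?thesis unfolding dual_lattice_def using x Zspan_Qspan by blast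
qed

end
end



theorem mainTheorem5:
  fixes p :: nat and v :: "'a::field \<Rightarrow> int"
    and scL :: "'a \<Rightarrow> 'v::ab_group_add \<Rightarrow> 'v" and qL :: "'v \<Rightarrow> 'a"
    and scM :: "'a \<Rightarrow> 'w::ab_group_add \<Rightarrow> 'w" and qM :: "'w \<Rightarrow> 'a"
    and r m :: nat and f f' c :: "nat \<Rightarrow> 'v"
    and e :: "nat \<Rightarrow> 'w" and g :: "nat \<Rightarrow> 'v"
  assumes Qp: "padic_field p v"
    and r: "1 \<le> r"
    and VL: "vector_space_over scL" and qL: "quadratic_form scL qL"
    and VM: "vector_space_over scM" and qM: "quadratic_form scM qM"
    and Ltil: "is_lattice v scL qL c m" "even_lattice v scL qL c m"
    and L: "is_lattice v scL qL (hypfam r f f' c) (2 * r + m)"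
           "even_lattice v scL qL (hypfam r f f' c) (2 * r + m)"
    and split: "hyperbolic_frame qL r f f' c m"
    and M: "is_lattice v scM qM e r"
    and gamma: "\<forall>i<r. g i \<in> dual_lattice v scL qL (hypfam r f f' c) (2 * r + m)"
    and moments: "in_Lambda v r (\<lambda>i j. moment qM e i j - moment qL g i j)"
  shows "\<exists>\<phi>. isometric_embedding v scM qM (Zspan v scM e r) scL qL
                 (dual_lattice v scL qL (hypfam r f f' c) (2 * r + m)) \<phi> \<and>
             (\<forall>i<r. \<phi> (e i) - g i \<in> Zspan v scL (hypfam r f f' c) (2 * r + m))"
proof -
  define B where "B = hypfam r f f' c"
  define N where "N = 2 * r + m"
  define LL where "LL = Zspan v scL B N"
  define LD where "LD = dual_lattice v scL qL B N"
  have two: "(2::'a) \<noteq> 0" by (rule two_nz[OF Qp])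
  have fL: "f i \<in> LL" if "i < r" for i
  proof -
    have "B i = f i" using that by (simp add: B_def hypfam_def)
    moreover have "B i \<in> LL" unfolding LL_def using that by (intro Zspan_basis[OF Qp VL]) (simp add: N_def)
    ultimately show ?thesis by simp
  qed
  have f'L: "f' i \<in> LL" if "i < r" for i
  proof -
    have "B (r + i) = f' i" using that by (simp add: B_def hypfam_def)
    moreover have "B (r + i) \<in> LL" unfolding LL_def using that by (intro Zspan_basis[OF Qp VL]) (simp add: N_def)
    ultimately show ?thesis by simp
  qed
  have LD_I: "x \<in> LL \<Longrightarrow> x \<in> LD" for x
    unfolding LL_def LD_def B_def N_def by (rule Zspan_dual[OF Qp VL qL L(2)])
  have gD: "g i \<in> LD" if "i < r" for i using gamma that by (simp add: LD_def B_def N_def)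
  have LD_bil: "x \<in> LD \<Longrightarrow> y \<in> LL \<Longrightarrow> bil qL x y \<in> Zp v" for x y
    unfolding LD_def LL_def dual_lattice_def by blast
  have ff: "bil qL (f i) (f j) = 0" if "i < r" "j < r" for i j
    using split that by (simp add: hyperbolic_frame_def)
  have f'f': "bil qL (f' i) (f' j) = 0" if "i < r" "j < r" for i j
    using split that by (simp add: hyperbolic_frame_def)
  have ff': "bil qL (f i) (f' j) = (if i = j then 1 else 0)" if "i < r" "j < r" for i j
    using split that by (simp add: hyperbolic_frame_def)
  have f'f: "bil qL (f' j) (f i) = (if i = j then 1 else 0)" if "i < r" "j < r" for i j
    using ff'[OF that] bil_sym by metis
  have delta: "(\<Sum>j<r. a j * (if k = j then 1 else 0)) = a k" if "k < r" for a :: "nat \<Rightarrow> 'a" and k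
  proof -
    have "(\<Sum>j<r. a j * (if k = j then 1 else 0)) = (\<Sum>j<r. if k = j then a k else 0)"
      by (rule sum.cong) auto
    also have "\<dots> = a k" using that by simp
    finally show ?thesis .
  qed
  have delta': "(\<Sum>j<r. a j * (if j = k then 1 else 0)) = a k" if "k < r" for a :: "nat \<Rightarrow> 'a" and k
    using delta[OF that, of a] by (simp add: eq_commute)

  define \<alpha> where "\<alpha> i j = bil qL (g i) (f' j)" for i j
  define \<beta> where "\<beta> i j = bil qL (g i) (f j)" for i j
  have \<alpha>Z: "\<alpha> i j \<in> Zp v" if "i < r" "j < r" for i j
    unfolding \<alpha>_def using LD_bil gD f'L that by blast
  have \<beta>Z: "\<beta> i j \<in> Zp v" if "i < r" "j < r" for i j
    unfolding \<beta>_def using LD_bil gD fL that by blast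
  define P where "P i = (\<Sum>j<r. scL (\<alpha> i j) (f j)) + (\<Sum>j<r. scL (\<beta> i j) (f' j))" for i
  define h where "h i = g i - P i" for i
  have Pf: "bil qL (P i) (f k) = \<beta> i k" if "k < r" for i k
  proof -
    have "bil qL (P i) (f k) = (\<Sum>j<r. \<alpha> i j * bil qL (f j) (f k)) + (\<Sum>j<r. \<beta> i j * bil qL (f' j) (f k))"
      unfolding P_def by (simp add: bil_add_left[OF qL] bil_lincomb_left[OF qL])
    also have "\<dots> = 0 + (\<Sum>j<r. \<beta> i j * (if k = j then 1 else 0))"
      using that by (intro arg_cong2[where f="(+)"] sum.neutral sum.cong) (auto simp: ff f'f)
    also have "\<dots> = \<beta> i k" using delta that by simp
    finally show ?thesis .
  qed
  have Pf': "bil qL (P i) (f' k) = \<alpha> i k" if "k < r" for i k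
  proof -
    have "bil qL (P i) (f' k) = (\<Sum>j<r. \<alpha> i j * bil qL (f j) (f' k)) + (\<Sum>j<r. \<beta> i j * bil qL (f' j) (f' k))"
      unfolding P_def by (simp add: bil_add_left[OF qL] bil_lincomb_left[OF qL])
    also have "\<dots> = (\<Sum>j<r. \<alpha> i j * (if j = k then 1 else 0)) + 0"
      using that by (intro arg_cong2[where f="(+)"] sum.neutral sum.cong) (auto simp: ff' f'f')
    also have "\<dots> = \<alpha> i k" using delta' that by simp
    finally show ?thesis .
  qed
  have hf: "bil qL (h i) (f k) = 0" if "k < r" for i k
    unfolding h_def using Pf[OF that] by (simp add: bil_diff_left[OF qL] \<beta>_def)
  have hf': "bil qL (h i) (f' k) = 0" if "k < r" for i k
    unfolding h_def using Pf'[OF that] by (simp add: bil_diff_left[OF qL] \<alpha>_def)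
  have hP: "bil qL (h i) (P k) = 0" for i k
    unfolding P_def by (simp add: bil_add_right[OF qL] bil_lincomb_right[OF qL] hf hf')
  have Pg: "bil qL (P i) (g k) = (\<Sum>j<r. \<alpha> i j * \<beta> k j) + (\<Sum>j<r. \<beta> i j * \<alpha> k j)" for i k
    unfolding P_def \<alpha>_def \<beta>_def
    by (simp add: bil_add_left[OF qL] bil_lincomb_left[OF qL] bil_sym[of qL "f _"] bil_sym[of qL "f' _"])
  have hh: "bil qL (h i) (h k) = bil qL (g i) (g k) - ((\<Sum>j<r. \<alpha> i j * \<beta> k j) + (\<Sum>j<r. \<beta> i j * \<alpha> k j))" for i k
  proof -
    have "bil qL (h i) (h k) = bil qL (h i) (g k)"
      using hP by (simp add: h_def[of k] bil_diff_right[OF qL])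
    also have "\<dots> = bil qL (g i) (g k) - bil qL (P i) (g k)"
      by (simp add: h_def bil_diff_left[OF qL])
    finally show ?thesis using Pg by simp
  qed

  define S where "S i k = (\<Sum>j<r. \<alpha> i j * \<beta> k j) + (\<Sum>j<r. \<beta> i j * \<alpha> k j)" for i k
  define D where "D i k = moment qM e i k - moment qL g i k" for i k
  have DL: "\<forall>i<r. \<forall>j<r. D i j = D j i \<and> (if i = j then D i j \<in> Zp v else 2 * D i j \<in> Zp v)"
    using moments unfolding in_Lambda_def D_def by (simp only:)
  define T where "T i k = bil qM (e i) (e k) - bil qL (h i) (h k)" for i k
  have T2: "T i k = 2 * D i k + S i k" for i k
    unfolding T_def D_def moment_def hh S_def using two by (simp add: field_simps)
  have SZ: "S i k \<in> Zp v" if "i < r" "k < r" for i k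
    unfolding S_def using that \<alpha>Z \<beta>Z
    by (intro Zp_add[OF Qp] Zp_sum[OF Qp] Zp_mult[OF Qp]) auto
  have Tsym: "T k i = T i k" for i k
    unfolding T_def using bil_sym by metis
  have TZ: "T i k \<in> Zp v" if "i < r" "k < r" "i \<noteq> k" for i k
    using T2 DL that SZ Zp_add[OF Qp] by auto
  have Tdiag: "T i i / 2 = D i i + (\<Sum>j<r. \<alpha> i j * \<beta> i j)" for i
  proof -
    have "S i i = 2 * (\<Sum>j<r. \<alpha> i j * \<beta> i j)"
      unfolding S_def by (simp add: mult.commute)
    then show ?thesis using T2 two by (simp add: field_simps)
  qed
  have TdZ: "T i i / 2 \<in> Zp v" if "i < r" for i
    unfolding Tdiag using that DL \<alpha>Z \<beta>Z
    by (intro Zp_add[OF Qp] Zp_sum[OF Qp] Zp_mult[OF Qp]) auto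
  define b where "b i k = (if i = k then T i i / 2 else if i < k then T i k else 0)" for i k
  have bZ: "b i k \<in> Zp v" if "i < r" "k < r" for i k
    unfolding b_def using that TZ TdZ Zp_0[OF Qp] by auto
  have bsum: "b i k + b k i = T i k" for i k
    unfolding b_def using Tsym[of i k] two by auto
  define W where "W i = (\<Sum>j<r. scL (b i j) (f' j))" for i
  define u where "u i = h i + f i + W i" for i
  have hW: "bil qL (h i) (W k) = 0" for i k
    unfolding W_def by (simp add: bil_lincomb_right[OF qL] hf')
  have fW: "bil qL (f i) (W k) = b k i" if "i < r" for i k
  proof -
    have "bil qL (f i) (W k) = (\<Sum>j<r. b k j * (if i = j then 1 else 0))"
      unfolding W_def using that by (simp add: bil_lincomb_right[OF qL] ff')
    then show ?thesis using delta that by simp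
  qed
  have Wf': "bil qL (W i) (f' k) = 0" if "k < r" for i k
    unfolding W_def using that by (simp add: bil_lincomb_left[OF qL] f'f')
  have WW: "bil qL (W i) (W k) = 0" for i k
    using Wf' unfolding W_def[of k] by (simp add: bil_lincomb_right[OF qL])
  have uu: "bil qL (u i) (u k) = bil qM (e i) (e k)" if "i < r" "k < r" for i k
  proof -
    have "bil qL (u i) (u k) = bil qL (h i) (h k) + b k i + b i k"
      unfolding u_def using that
      by (simp add: bil_add_left[OF qL] bil_add_right[OF qL] hf hW fW WW ff
          bil_sym[of qL "f i" "h k"] bil_sym[of qL "W i" "h k"] bil_sym[of qL "W i" "f k"])
    also have "\<dots> = bil qL (h i) (h k) + T i k" using bsum[of i k] by (simp add: add.commute add.assoc)
    finally show ?thesis unfolding T_def by simp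
  qed
  have uf': "bil qL (u i) (f' k) = (if i = k then 1 else 0)" if "i < r" "k < r" for i k
    unfolding u_def using that by (simp add: bil_add_left[OF qL] hf' ff' Wf')
  have PL: "P i \<in> LL" if "i < r" for i
    unfolding P_def LL_def using that \<alpha>Z \<beta>Z fL f'L
    by (intro Zspan_add[OF Qp VL] Zspan_sum[OF Qp VL] Zspan_sc[OF Qp VL]) (auto simp: LL_def)
  have WL: "W i \<in> LL" if "i < r" for i
    unfolding W_def LL_def using that bZ f'L
    by (intro Zspan_sum[OF Qp VL] Zspan_sc[OF Qp VL]) (auto simp: LL_def)
  have ugL: "u i - g i \<in> LL" if "i < r" for i
  proof -
    have "u i - g i = (f i + W i) - P i" unfolding u_def h_def by (simp add: algebra_simps)
    then show ?thesis using fL WL PL that unfolding LL_def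
      by (simp add: Zspan_add[OF Qp VL] Zspan_diff[OF Qp VL])
  qed
  have uD: "u i \<in> LD" if "i < r" for i
  proof -
    have "u i = g i + (u i - g i)" by simp
    then show ?thesis using gD[OF that] LD_I[OF ugL[OF that]] dual_add[OF Qp VL qL]
      unfolding LD_def by metis
  qed

  have li: "\<forall>a. (\<Sum>i<r. scM (a i) (e i)) = 0 \<longrightarrow> (\<forall>i<r. a i = 0)"
    using M unfolding is_lattice_def by blast
  define cf where "cf x = (SOME a. x = (\<Sum>i<r. scM (a i) (e i)))" for x
  define \<phi> where "\<phi> x = (\<Sum>i<r. scL (cf x i) (u i))" for x
  have phi_rep: "\<phi> (\<Sum>i<r. scM (a i) (e i)) = (\<Sum>i<r. scL (a i) (u i))" for a
  proof -
    let ?x = "\<Sum>i<r. scM (a i) (e i)"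
    have "?x = (\<Sum>i<r. scM (cf ?x i) (e i))"
      unfolding cf_def by (rule someI[where x=a]) simp
    then have "\<forall>i<r. cf ?x i = a i"
      using lincomb_unique[OF VM li] by metis
    then show ?thesis unfolding \<phi>_def by (intro sum.cong) auto
  qed
  have ZM: "x \<in> Zspan v scM e r \<longleftrightarrow> (\<exists>a. x = (\<Sum>i<r. scM (a i) (e i)) \<and> (\<forall>i<r. a i \<in> Zp v))" for x
    unfolding Zspan_def by blast
  have iso: "isometric_embedding v scM qM (Zspan v scM e r) scL qL LD \<phi>"
    unfolding isometric_embedding_def
  proof (intro conjI ballI)
    fix x assume "x \<in> Zspan v scM e r"
    then obtain a where a: "x = (\<Sum>i<r. scM (a i) (e i))" "\<forall>i<r. a i \<in> Zp v" using ZM by blast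
    show "\<phi> x \<in> LD" unfolding a(1) phi_rep LD_def
      using a(2) uD unfolding LD_def
      by (intro dual_sum[OF Qp VL qL] dual_sc[OF Qp VL qL]) auto
    show "qL (\<phi> x) = qM x" unfolding a(1) phi_rep
      by (simp add: q_lincomb[OF qL VL two] q_lincomb[OF qM VM two], intro impI sum.cong refl) (simp add: uu)
  next
    fix x y assume "x \<in> Zspan v scM e r" "y \<in> Zspan v scM e r"
    then obtain a c where a: "x = (\<Sum>i<r. scM (a i) (e i))" and c: "y = (\<Sum>i<r. scM (c i) (e i))"
      using ZM by blast
    show "\<phi> (x + y) = \<phi> x + \<phi> y"
      unfolding a c lincomb_add[OF VM] phi_rep lincomb_add[OF VL] ..
  next
    fix t x assume "t \<in> Zp v" "x \<in> Zspan v scM e r"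
    then obtain a where a: "x = (\<Sum>i<r. scM (a i) (e i))" using ZM by blast
    show "\<phi> (scM t x) = scL t (\<phi> x)"
      unfolding a lincomb_sc[OF VM] phi_rep lincomb_sc[OF VL] ..
  next
    show "inj_on \<phi> (Zspan v scM e r)"
    proof (rule inj_onI)
      fix x y assume "x \<in> Zspan v scM e r" "y \<in> Zspan v scM e r" and eq: "\<phi> x = \<phi> y"
      then obtain a c where a: "x = (\<Sum>i<r. scM (a i) (e i))" and c: "y = (\<Sum>i<r. scM (c i) (e i))"
        using ZM by blast
      have coef: "bil qL (\<Sum>i<r. scL (a i) (u i)) (f' k) = a k" if "k < r" for a k
      proof -
        have "bil qL (\<Sum>i<r. scL (a i) (u i)) (f' k) = (\<Sum>x<r. a x * bil qL (u x) (f' k))"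
          by (simp add: bil_lincomb_left[OF qL])
        also have "\<dots> = (\<Sum>x<r. a x * (if x = k then 1 else 0))"
          by (rule sum.cong) (auto simp: uf' that)
        also have "\<dots> = a k" by (rule delta'[OF that])
        finally show ?thesis .
      qed
      have "\<forall>k<r. a k = c k"
        using eq coef unfolding a c phi_rep by metis
      then show "x = y" unfolding a c by (intro sum.cong) auto
    qed
  qed
  have ei: "\<phi> (e i) = u i" if "i < r" for i
  proof -
    have "e i = (\<Sum>j<r. scM (if j = i then 1 else 0) (e j))"
      using lincomb_delta[OF VM that] by simp
    then have "\<phi> (e i) = (\<Sum>j<r. scL (if j = i then 1 else 0) (u j))"
      using phi_rep by metis
    then show ?thesis using lincomb_delta[OF VL that] by simp
  qed
  show ?thesis
    using iso ei ugL unfolding LD_def LL_def B_def N_def by auto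
qed
end
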